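(* Let $\mathcal{M}$ be a matroid on $[n]$, $J=J(\mathcal{M})$, and let $v$ be such that $\{v\}$ is independent in $\mathcal{M}$. Let $J\div v$ be the ideal generated by $G(J)-G(J(\mathcal{M}/v))$. Then $$G(J(\mathcal{M}/v))=\{N\in G(J): x_v\nmid N\}\quad\text{and}\quad G(J\div v)=\{N\in G(J):x_v\mid N\}.$$ Furthermore, for every independent set $A$ of $\mathcal{M}$, $G(J(\mathcal{M}/A))=\{N\in G(J):\operatorname{supp}N\cap A=\emptyset\}$.
   Context: $R=\mathbb{K}[x_1,\ldots,x_n]$, $\mathbb{K}$ a field. For a matroid $\mathcal{N}$ on $E\subseteq[n]$, $J(\mathcal{N})=\bigcap_{F\in\mathcal{B}(\mathcal{N})}(x_i:i\in F)$ formed in $\mathbb{K}[x_i:i\in E]$ and extended to $R$. $\mathcal{M}/A$ is the contraction by the independent set $A$ (matroid on $[n]-A$ whose independent sets are the $I$ with $I\cup A$ independent). $G(\cdot)$ denotes minimal monomial generators; $\operatorname{supp}N=\{i:x_i\mid N\}$. *)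

theory Defs
  imports Main "HOL-Library.Poly_Mapping"
begin

definition matroid :: "nat set \<Rightarrow> nat set set \<Rightarrow> bool" where
  "matroid E Ind \<longleftrightarrow> finite E \<and> {} \<in> Ind \<and> (\<forall>X\<in>Ind. X \<subseteq> E)
     \<and> (\<forall>X Y. X \<in> Ind \<and> Y \<subseteq> X \<longrightarrow> Y \<in> Ind)
     \<and> (\<forall>X\<in>Ind. \<forall>Y\<in>Ind. card X < card Y \<longrightarrow> (\<exists>y\<in>Y - X. insert y X \<in> Ind))"

definition bases :: "nat set set \<Rightarrow> nat set set" where
  "bases Ind = {B \<in> Ind. \<forall>X\<in>Ind. B \<subseteq> X \<longrightarrow> X = B}"

definition contr_ground :: "nat set \<Rightarrow> nat set \<Rightarrow> nat set" where
  "contr_ground E A = E - A"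

definition contr_indep :: "nat set \<Rightarrow> nat set set \<Rightarrow> nat set \<Rightarrow> nat set set" where
  "contr_indep E Ind A = {X. X \<subseteq> E - A \<and> X \<union> A \<in> Ind}"

type_synonym 'k mpoly = "(nat \<Rightarrow>\<^sub>0 nat) \<Rightarrow>\<^sub>0 'k"

definition xmon :: "(nat \<Rightarrow>\<^sub>0 nat) \<Rightarrow> 'k::field mpoly" where
  "xmon \<alpha> = Poly_Mapping.single \<alpha> 1"

definition xvar :: "nat \<Rightarrow> 'k::field mpoly" where
  "xvar i = xmon (Poly_Mapping.single i 1)"

definition polys :: "nat set \<Rightarrow> 'k::field mpoly set" where
  "polys V = {p :: 'k mpoly. \<forall>\<alpha>\<in>Poly_Mapping.keys p. Poly_Mapping.keys (\<alpha> :: nat \<Rightarrow>\<^sub>0 nat) \<subseteq> V}"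

definition gen_ideal :: "nat set \<Rightarrow> 'k::field mpoly set \<Rightarrow> 'k mpoly set" where
  "gen_ideal V S = {(\<Sum>s\<in>T. c s * s) | c T. finite T \<and> T \<subseteq> S \<and> (\<forall>s\<in>T. c s \<in> polys V)}"

(* J(N) for the matroid N = (E, Ind): intersection over bases F of (x_i : i \<in> F), formed in
   K[x_i : i \<in> E] and then extended to R = K[x_1,...,x_n] *)
definition Jideal :: "nat \<Rightarrow> nat set \<Rightarrow> nat set set \<Rightarrow> 'k::field mpoly set" where
  "Jideal n E Ind = gen_ideal {1..n} (\<Inter>F\<in>bases Ind. gen_ideal E (xvar ` F))"

definition mdvd :: "(nat \<Rightarrow>\<^sub>0 nat) \<Rightarrow> (nat \<Rightarrow>\<^sub>0 nat) \<Rightarrow> bool" where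
  "mdvd \<beta> \<alpha> \<longleftrightarrow> (\<forall>i. Poly_Mapping.lookup \<beta> i \<le> Poly_Mapping.lookup \<alpha> i)"

(* G(I): minimal monomial generators of a monomial ideal I, given by exponent vectors *)
definition mingens :: "'k::field mpoly set \<Rightarrow> (nat \<Rightarrow>\<^sub>0 nat) set" where
  "mingens I = {\<alpha>. xmon \<alpha> \<in> I \<and> (\<forall>\<beta>. xmon \<beta> \<in> I \<and> mdvd \<beta> \<alpha> \<longrightarrow> \<beta> = \<alpha>)}"

end

theory Submission
  imports Defs
begin

lemma keys_xmon[simp]: "Poly_Mapping.keys (xmon a :: 'k::field mpoly) = {a}"
  by (simp add: xmon_def)

lemma xmon_mult: "(xmon a :: 'k::field mpoly) * xmon b = xmon (a + b)"
  by (simp add: xmon_def mult_single)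

lemma keys_add_nat: "Poly_Mapping.keys (a + b :: 'a \<Rightarrow>\<^sub>0 nat) = Poly_Mapping.keys a \<union> Poly_Mapping.keys b"
  by (auto simp: in_keys_iff lookup_add)

lemma mdvd_add: "mdvd b c \<Longrightarrow> mdvd b (a + c)"
  by (auto simp: mdvd_def lookup_add intro: trans_le_add2)

lemma mdvd_refl: "mdvd a a" by (simp add: mdvd_def)

lemma mdvd_antisym: "mdvd a b \<Longrightarrow> mdvd b a \<Longrightarrow> a = b"
  by (auto simp: mdvd_def intro!: poly_mapping_eqI intro: le_antisym)

lemma mdvd_trans: "mdvd a b \<Longrightarrow> mdvd b c \<Longrightarrow> mdvd a c"
  by (auto simp: mdvd_def intro: le_trans)

lemma mdvd_keys: "mdvd b a \<Longrightarrow> Poly_Mapping.keys b \<subseteq> Poly_Mapping.keys a"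
  by (auto simp: mdvd_def in_keys_iff) (meson order_less_le_trans)

lemma gen_ideal_keys:
  assumes p: "p \<in> gen_ideal V S"
    and S: "\<And>s g. s \<in> S \<Longrightarrow> g \<in> Poly_Mapping.keys s \<Longrightarrow> Q g"
    and up: "\<And>a g. Q g \<Longrightarrow> Poly_Mapping.keys a \<subseteq> V \<Longrightarrow> Q (a + g)"
    and g: "g \<in> Poly_Mapping.keys p"
  shows "Q g"
proof -
  from p obtain c T where pe: "p = (\<Sum>s\<in>T. c s * s)" and T: "T \<subseteq> S" and cV: "\<forall>s\<in>T. c s \<in> polys V"
    unfolding gen_ideal_def by blast
  have "g \<in> (\<Union>s\<in>T. Poly_Mapping.keys (c s * s))" using g pe keys_sum[of "\<lambda>s. c s * s" T] by auto
  then obtain s where sT: "s \<in> T" and gs: "g \<in> Poly_Mapping.keys (c s * s)" by blast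
  from keys_mult gs obtain a b where "g = a + b" "a \<in> Poly_Mapping.keys (c s)" "b \<in> Poly_Mapping.keys s" by blast
  with S up sT T cV show ?thesis unfolding polys_def by blast
qed

lemma gen_ideal_mon:
  assumes "xmon b \<in> S" "mdvd b a" "Poly_Mapping.keys a \<subseteq> V"
  shows "(xmon a :: 'k::field mpoly) \<in> gen_ideal V S"
proof -
  have eq: "a - b + b = a" using assms(2)
    by (auto intro!: poly_mapping_eqI simp: lookup_add lookup_minus mdvd_def)
  have "Poly_Mapping.keys (a - b) \<subseteq> V" using assms(3) by (auto simp: in_keys_iff lookup_minus)
  then have "xmon (a - b) \<in> (polys V :: 'k mpoly set)" by (auto simp: polys_def)
  define c where "c = (\<lambda>_::'k mpoly. xmon (a - b) :: 'k mpoly)"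
  have e: "(xmon a :: 'k mpoly) = (\<Sum>s\<in>{xmon b}. c s * s)" by (simp add: c_def xmon_mult eq)
  have "finite {xmon b}" "{xmon b} \<subseteq> S" "\<forall>s\<in>{xmon b}. c s \<in> polys V"
    using assms(1) \<open>xmon (a - b) \<in> polys V\<close> by (auto simp: c_def)
  then show ?thesis unfolding gen_ideal_def using e by blast
qed

lemma max_exists:
  assumes "finite E" "X0 \<in> I" "\<forall>X\<in>I. X \<subseteq> E"
  shows "\<exists>X\<in>I. \<forall>Y\<in>I. card Y \<le> card X"
proof -
  have "I \<subseteq> Pow E" using assms by auto
  hence "finite I" using assms(1) finite_subset by blast
  hence f: "finite (card ` I)" by simp
  let ?m = "Max (card ` I)"
  have "?m \<in> card ` I" using f assms(2) by (intro Max_in) auto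
  then obtain X where "X \<in> I" "card X = ?m" by auto
  moreover have "\<forall>Y\<in>I. card Y \<le> ?m" using f by auto
  ultimately show ?thesis by metis
qed

lemma bases_exist:
  assumes "finite E" "{} \<in> I" "\<forall>X\<in>I. X \<subseteq> E"
  shows "\<exists>B. B \<in> bases I"
proof -
  obtain X where X: "X \<in> I" "\<forall>Y\<in>I. card Y \<le> card X" using max_exists[OF assms] by blast
  have "\<forall>Y\<in>I. X \<subseteq> Y \<longrightarrow> Y = X"
  proof (intro ballI impI)
    fix Y assume Y: "Y \<in> I" "X \<subseteq> Y"
    have "Y \<subseteq> E" using Y assms by auto
    then have "finite Y" using assms(1) by (rule finite_subset)
    moreover have "card Y \<le> card X" using X Y by auto
    ultimately show "Y = X" using Y card_subset_eq[of Y X] card_mono[of Y X] by (metis card_mono le_antisym)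
  qed
  then show ?thesis using X unfolding bases_def by auto
qed

lemma extend_basis:
  assumes M: "matroid E Ind" and A: "A \<in> Ind" and B: "B \<in> bases Ind"
  shows "\<exists>B2\<in>bases Ind. A \<subseteq> B2 \<and> B2 \<subseteq> A \<union> B"
proof -
  let ?F = "{Z\<in>Ind. A \<subseteq> Z \<and> Z \<subseteq> A \<union> B}"
  from M have fE: "finite E" and sub: "\<forall>X\<in>Ind. X \<subseteq> E"
     and aug: "\<forall>X\<in>Ind. \<forall>Y\<in>Ind. card X < card Y \<longrightarrow> (\<exists>y\<in>Y - X. insert y X \<in> Ind)"
    unfolding matroid_def by auto
  obtain Z where Z: "Z \<in> ?F" "\<forall>Y\<in>?F. card Y \<le> card Z"
    using max_exists[of E A ?F] fE A sub by auto
  have BI: "B \<in> Ind" and Bmax: "\<forall>X\<in>Ind. B \<subseteq> X \<longrightarrow> X = B" using B unfolding bases_def by auto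
  have "Z \<subseteq> E" using Z(1) sub by auto
  then have finZ: "finite Z" using fE by (rule finite_subset)
  have cZ: "card B \<le> card Z"
  proof (rule ccontr)
    assume "\<not> ?thesis"
    then have lt: "card Z < card B" by simp
    have ZI: "Z \<in> Ind" using Z(1) by simp
    obtain y where y: "y \<in> B - Z" "insert y Z \<in> Ind" using aug[rule_format, OF ZI BI lt] by blast
    then have "insert y Z \<in> ?F" using Z(1) by auto
    then have "card (insert y Z) \<le> card Z" using Z(2) by blast
    then show False using y finZ by simp
  qed
  have "\<forall>Y\<in>Ind. Z \<subseteq> Y \<longrightarrow> Y = Z"
  proof (intro ballI impI)
    fix Y assume Y: "Y \<in> Ind" "Z \<subseteq> Y"
    show "Y = Z"
    proof (rule ccontr)
      assume "Y \<noteq> Z"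
      hence "Z \<subset> Y" using Y by auto
      moreover have "Y \<subseteq> E" using Y sub by auto
      then have "finite Y" using fE by (rule finite_subset)
      ultimately have "card Z < card Y" by (simp add: psubset_card_mono)
      hence "card B < card Y" using cZ by simp
      then obtain y where "y \<in> Y - B" "insert y B \<in> Ind" using aug BI Y by blast
      then show False using Bmax by blast
    qed
  qed
  then have "Z \<in> bases Ind" using Z(1) unfolding bases_def by auto
  then show ?thesis using Z(1) by auto
qed

lemma contr_basis_up:
  assumes M: "matroid E Ind" and B: "B' \<in> bases (contr_indep E Ind A)"
  shows "B' \<union> A \<in> bases Ind"
proof -
  from M have sub: "\<forall>X\<in>Ind. X \<subseteq> E" unfolding matroid_def by auto
  have B1: "B' \<subseteq> E - A" "B' \<union> A \<in> Ind" and Bm: "\<forall>X. X \<subseteq> E - A \<and> X \<union> A \<in> Ind \<and> B' \<subseteq> X \<longrightarrow> X = B'"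
    using B unfolding bases_def contr_indep_def by auto
  have "\<forall>Y\<in>Ind. B' \<union> A \<subseteq> Y \<longrightarrow> Y = B' \<union> A"
  proof (intro ballI impI)
    fix Y assume Y: "Y \<in> Ind" "B' \<union> A \<subseteq> Y"
    have "Y - A \<subseteq> E - A" using Y sub by auto
    moreover have "(Y - A) \<union> A \<in> Ind" using Y by (metis Un_Diff_cancel2 sup.absorb1 le_supE)
    moreover have "B' \<subseteq> Y - A" using Y B1 by auto
    ultimately have "Y - A = B'" using Bm by blast
    then show "Y = B' \<union> A" using Y by auto
  qed
  then show ?thesis using B1(2) unfolding bases_def by blast
qed

lemma contr_basis_down:
  assumes M: "matroid E Ind" and B: "B2 \<in> bases Ind" and AB: "A \<subseteq> B2"
  shows "B2 - A \<in> bases (contr_indep E Ind A)"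
proof -
  from M have sub: "\<forall>X\<in>Ind. X \<subseteq> E" unfolding matroid_def by auto
  have BI: "B2 \<in> Ind" and Bm: "\<forall>X\<in>Ind. B2 \<subseteq> X \<longrightarrow> X = B2" using B unfolding bases_def by auto
  have "B2 - A \<in> contr_indep E Ind A" using BI sub AB unfolding contr_indep_def
    by (auto simp: Un_absorb2)
  moreover have "\<forall>X\<in>contr_indep E Ind A. B2 - A \<subseteq> X \<longrightarrow> X = B2 - A"
  proof (intro ballI impI)
    fix X assume X: "X \<in> contr_indep E Ind A" "B2 - A \<subseteq> X"
    hence "X \<union> A \<in> Ind" "X \<subseteq> E - A" unfolding contr_indep_def by auto
    moreover have "B2 \<subseteq> X \<union> A" using X by auto
    ultimately have "X \<union> A = B2" using Bm by blast
    then show "X = B2 - A" using \<open>X \<subseteq> E - A\<close> by auto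
  qed
  ultimately show ?thesis unfolding bases_def by auto
qed


lemma Jideal_mem:
  assumes fE: "finite E" and e: "{} \<in> I" and sub: "\<forall>X\<in>I. X \<subseteq> E" and En: "E \<subseteq> {1..n}"
  shows "(xmon a :: 'k::field mpoly) \<in> Jideal n E I \<longleftrightarrow>
     Poly_Mapping.keys a \<subseteq> {1..n} \<and> (\<forall>F\<in>bases I. Poly_Mapping.keys a \<inter> F \<noteq> {})"
proof
  have bsub: "\<And>F. F \<in> bases I \<Longrightarrow> F \<subseteq> E" using sub unfolding bases_def by auto
  obtain F0 where F0: "F0 \<in> bases I" using bases_exist[OF fE e sub] by blast
  assume m: "(xmon a :: 'k mpoly) \<in> Jideal n E I"
  have inner: "Poly_Mapping.keys g \<subseteq> E \<and> Poly_Mapping.keys g \<inter> F \<noteq> {}"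
    if "s \<in> gen_ideal E (xvar ` F :: 'k mpoly set)" "g \<in> Poly_Mapping.keys s" "F \<in> bases I" for s g F
  proof (rule gen_ideal_keys[OF that(1) _ _ that(2), where Q="\<lambda>g. Poly_Mapping.keys g \<subseteq> E \<and> Poly_Mapping.keys g \<inter> F \<noteq> {}"])
    fix s g assume "s \<in> xvar ` F" "g \<in> Poly_Mapping.keys s"
    then obtain i where "i \<in> F" "g = Poly_Mapping.single i 1" by (auto simp: xvar_def)
    then show "Poly_Mapping.keys g \<subseteq> E \<and> Poly_Mapping.keys g \<inter> F \<noteq> {}" using bsub[OF that(3)] by auto
  next
    fix a g :: "nat \<Rightarrow>\<^sub>0 nat" assume "Poly_Mapping.keys g \<subseteq> E \<and> Poly_Mapping.keys g \<inter> F \<noteq> {}" "Poly_Mapping.keys a \<subseteq> E"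
    then show "Poly_Mapping.keys (a + g) \<subseteq> E \<and> Poly_Mapping.keys (a + g) \<inter> F \<noteq> {}"
      by (auto simp: keys_add_nat)
  qed
  show "Poly_Mapping.keys a \<subseteq> {1..n} \<and> (\<forall>F\<in>bases I. Poly_Mapping.keys a \<inter> F \<noteq> {})"
  proof (rule gen_ideal_keys[OF m[unfolded Jideal_def], where Q="\<lambda>g. Poly_Mapping.keys g \<subseteq> {1..n} \<and> (\<forall>F\<in>bases I. Poly_Mapping.keys g \<inter> F \<noteq> {})"])
    fix s g assume s: "s \<in> (\<Inter>F\<in>bases I. gen_ideal E (xvar ` F :: 'k mpoly set))" "g \<in> Poly_Mapping.keys s"
    then have "\<forall>F\<in>bases I. Poly_Mapping.keys g \<subseteq> E \<and> Poly_Mapping.keys g \<inter> F \<noteq> {}"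
      using inner by blast
    then show "Poly_Mapping.keys g \<subseteq> {1..n} \<and> (\<forall>F\<in>bases I. Poly_Mapping.keys g \<inter> F \<noteq> {})"
      using F0 En by blast
  next
    fix a g :: "nat \<Rightarrow>\<^sub>0 nat" assume "Poly_Mapping.keys g \<subseteq> {1..n} \<and> (\<forall>F\<in>bases I. Poly_Mapping.keys g \<inter> F \<noteq> {})"
      "Poly_Mapping.keys a \<subseteq> {1..n}"
    then show "Poly_Mapping.keys (a + g) \<subseteq> {1..n} \<and> (\<forall>F\<in>bases I. Poly_Mapping.keys (a + g) \<inter> F \<noteq> {})"
      by (auto simp: keys_add_nat)
  qed simp
next
  have bsub: "\<And>F. F \<in> bases I \<Longrightarrow> F \<subseteq> E" using sub unfolding bases_def by auto
  assume h: "Poly_Mapping.keys a \<subseteq> {1..n} \<and> (\<forall>F\<in>bases I. Poly_Mapping.keys a \<inter> F \<noteq> {})"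
  define b where "b = Poly_Mapping.mapp (\<lambda>k x. if k \<in> E then x else 0) a"
  have lb: "Poly_Mapping.lookup b k = (if k \<in> E then Poly_Mapping.lookup a k else 0)" for k
    by (auto simp: b_def lookup_mapp when_def in_keys_iff)
  have kb: "Poly_Mapping.keys b = Poly_Mapping.keys a \<inter> E" by (auto simp: in_keys_iff lb split: if_splits)
  have db: "mdvd b a" by (auto simp: mdvd_def lb)
  have "(xmon b :: 'k mpoly) \<in> gen_ideal E (xvar ` F)" if F: "F \<in> bases I" for F
  proof -
    obtain i where i: "i \<in> Poly_Mapping.keys a" "i \<in> F" using h F by blast
    have iE: "i \<in> E" using bsub[OF F] i by auto
    have "xmon (Poly_Mapping.single i 1) \<in> (xvar ` F :: 'k mpoly set)" using i by (auto simp: xvar_def)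
    moreover have "mdvd (Poly_Mapping.single i 1) b"
      using i iE by (auto simp: mdvd_def lb lookup_single in_keys_iff when_def)
    ultimately show ?thesis using kb by (intro gen_ideal_mon) auto
  qed
  then have "(xmon b :: 'k mpoly) \<in> (\<Inter>F\<in>bases I. gen_ideal E (xvar ` F))" by blast
  then show "(xmon a :: 'k mpoly) \<in> Jideal n E I" unfolding Jideal_def
    using db h by (intro gen_ideal_mon) auto
qed


lemma contr_general:
  assumes M: "matroid E Ind" and En: "E \<subseteq> {1..n}" and A: "A \<in> Ind"
  shows "mingens (Jideal n (contr_ground E A) (contr_indep E Ind A) :: 'k::field mpoly set)
     = {N \<in> mingens (Jideal n E Ind :: 'k mpoly set). Poly_Mapping.keys N \<inter> A = {}}"
proof -
  let ?H = "bases Ind" and ?HA = "bases (contr_indep E Ind A)"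
  from M have fE: "finite E" and e: "{} \<in> Ind" and sub: "\<forall>X\<in>Ind. X \<subseteq> E"
    unfolding matroid_def by auto
  have memJ: "(xmon a :: 'k mpoly) \<in> Jideal n E Ind \<longleftrightarrow>
     Poly_Mapping.keys a \<subseteq> {1..n} \<and> (\<forall>F\<in>?H. Poly_Mapping.keys a \<inter> F \<noteq> {})" for a
    by (rule Jideal_mem[OF fE e sub En])
  have memJA: "(xmon a :: 'k mpoly) \<in> Jideal n (contr_ground E A) (contr_indep E Ind A) \<longleftrightarrow>
     Poly_Mapping.keys a \<subseteq> {1..n} \<and> (\<forall>F\<in>?HA. Poly_Mapping.keys a \<inter> F \<noteq> {})" for a
    unfolding contr_ground_def
    by (rule Jideal_mem) (use fE A En in \<open>auto simp: contr_indep_def\<close>)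
  have HA_H: "\<forall>F\<in>?H. X \<inter> F \<noteq> {}" if h: "\<forall>F\<in>?HA. X \<inter> F \<noteq> {}" for X
  proof
    fix B assume B: "B \<in> ?H"
    obtain B2 where B2: "B2 \<in> ?H" "A \<subseteq> B2" "B2 \<subseteq> A \<union> B" using extend_basis[OF M A B] by blast
    have "B2 - A \<in> ?HA" using contr_basis_down[OF M B2(1,2)] .
    then have "X \<inter> (B2 - A) \<noteq> {}" using h by blast
    then show "X \<inter> B \<noteq> {}" using B2(3) by blast
  qed
  have H_HA: "\<forall>F\<in>?HA. X \<inter> F \<noteq> {}" if h: "\<forall>F\<in>?H. X \<inter> F \<noteq> {}" "X \<inter> A = {}" for X
  proof
    fix B' assume "B' \<in> ?HA"
    then have "B' \<union> A \<in> ?H" by (rule contr_basis_up[OF M])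
    then have "X \<inter> (B' \<union> A) \<noteq> {}" using h(1) by (rule bspec[rotated])
    then show "X \<inter> B' \<noteq> {}" using h(2) by (simp add: Int_Un_distrib)
  qed
  have avoid: "B' \<inter> A = {}" if "B' \<in> ?HA" for B'
    using that unfolding bases_def contr_indep_def by auto
  show ?thesis
  proof (rule set_eqI, rule iffI)
    fix a assume "a \<in> mingens (Jideal n (contr_ground E A) (contr_indep E Ind A) :: 'k mpoly set)"
    then have a1: "Poly_Mapping.keys a \<subseteq> {1..n}" "\<forall>F\<in>?HA. Poly_Mapping.keys a \<inter> F \<noteq> {}"
      and a2: "\<And>b. Poly_Mapping.keys b \<subseteq> {1..n} \<Longrightarrow> \<forall>F\<in>?HA. Poly_Mapping.keys b \<inter> F \<noteq> {} \<Longrightarrow> mdvd b a \<Longrightarrow> b = a"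
      unfolding mingens_def memJA by auto
    have disj: "Poly_Mapping.keys a \<inter> A = {}"
    proof (rule ccontr)
      assume "\<not> ?thesis"
      then obtain i where i: "i \<in> Poly_Mapping.keys a" "i \<in> A" by blast
      define b where "b = a - Poly_Mapping.single i (Poly_Mapping.lookup a i)"
      have lb: "Poly_Mapping.lookup b k = (if k = i then 0 else Poly_Mapping.lookup a k)" for k
        by (simp add: b_def lookup_minus lookup_single when_def)
      have kb: "Poly_Mapping.keys b = Poly_Mapping.keys a - {i}" by (auto simp: in_keys_iff lb split: if_splits)
      have "mdvd b a" by (simp add: mdvd_def lb)
      moreover have "Poly_Mapping.keys b \<subseteq> {1..n}" using a1 kb by auto
      moreover have "\<forall>F\<in>?HA. Poly_Mapping.keys b \<inter> F \<noteq> {}"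
      proof
        fix F assume F: "F \<in> ?HA"
        then have "i \<notin> F" using avoid i by blast
        then show "Poly_Mapping.keys b \<inter> F \<noteq> {}" using a1 F kb by blast
      qed
      ultimately have "b = a" using a2 by blast
      then show False using kb i by auto
    qed
    have "a \<in> mingens (Jideal n E Ind :: 'k mpoly set)"
      unfolding mingens_def memJ
    proof (intro CollectI conjI allI impI)
      show "Poly_Mapping.keys a \<subseteq> {1..n}" by (rule a1(1))
      show "\<forall>F\<in>?H. Poly_Mapping.keys a \<inter> F \<noteq> {}" using HA_H a1(2) by blast
      fix b assume b: "(Poly_Mapping.keys b \<subseteq> {1..n} \<and> (\<forall>F\<in>?H. Poly_Mapping.keys b \<inter> F \<noteq> {})) \<and> mdvd b a"
      then have "Poly_Mapping.keys b \<inter> A = {}" using mdvd_keys disj by blast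
      then have "\<forall>F\<in>?HA. Poly_Mapping.keys b \<inter> F \<noteq> {}" using H_HA b by blast
      then show "b = a" using a2 b by blast
    qed
    then show "a \<in> {N \<in> mingens (Jideal n E Ind :: 'k mpoly set). Poly_Mapping.keys N \<inter> A = {}}"
      using disj by blast
  next
    fix a assume "a \<in> {N \<in> mingens (Jideal n E Ind :: 'k mpoly set). Poly_Mapping.keys N \<inter> A = {}}"
    then have a1: "Poly_Mapping.keys a \<subseteq> {1..n}" "\<forall>F\<in>?H. Poly_Mapping.keys a \<inter> F \<noteq> {}"
      and a2: "\<And>b. Poly_Mapping.keys b \<subseteq> {1..n} \<Longrightarrow> \<forall>F\<in>?H. Poly_Mapping.keys b \<inter> F \<noteq> {} \<Longrightarrow> mdvd b a \<Longrightarrow> b = a"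
      and disj: "Poly_Mapping.keys a \<inter> A = {}"
      unfolding mingens_def memJ by auto
    show "a \<in> mingens (Jideal n (contr_ground E A) (contr_indep E Ind A) :: 'k mpoly set)"
      unfolding mingens_def memJA
    proof (intro CollectI conjI allI impI)
      show "Poly_Mapping.keys a \<subseteq> {1..n}" by (rule a1(1))
      show "\<forall>F\<in>?HA. Poly_Mapping.keys a \<inter> F \<noteq> {}" using H_HA a1(2) disj by blast
      fix b assume b: "(Poly_Mapping.keys b \<subseteq> {1..n} \<and> (\<forall>F\<in>?HA. Poly_Mapping.keys b \<inter> F \<noteq> {})) \<and> mdvd b a"
      then show "b = a" using a2 HA_H by blast
    qed
  qed
qed

lemma mingens_antichain:
  assumes S: "S \<subseteq> mingens (J :: 'k::field mpoly set)" and SV: "\<forall>a\<in>S. Poly_Mapping.keys a \<subseteq> V"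
  shows "mingens (gen_ideal V (xmon ` S) :: 'k mpoly set) = S"
proof -
  have mem: "(xmon a :: 'k mpoly) \<in> gen_ideal V (xmon ` S) \<longleftrightarrow> Poly_Mapping.keys a \<subseteq> V \<and> (\<exists>b\<in>S. mdvd b a)" for a
  proof
    assume m: "(xmon a :: 'k mpoly) \<in> gen_ideal V (xmon ` S)"
    show "Poly_Mapping.keys a \<subseteq> V \<and> (\<exists>b\<in>S. mdvd b a)"
    proof (rule gen_ideal_keys[OF m, where Q="\<lambda>g. Poly_Mapping.keys g \<subseteq> V \<and> (\<exists>b\<in>S. mdvd b g)"])
      fix s g assume "s \<in> xmon ` S" "g \<in> Poly_Mapping.keys s"
      then show "Poly_Mapping.keys g \<subseteq> V \<and> (\<exists>b\<in>S. mdvd b g)" using SV mdvd_refl by (auto intro: bexI[of _ g])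
    next
      fix c g :: "nat \<Rightarrow>\<^sub>0 nat" assume "Poly_Mapping.keys g \<subseteq> V \<and> (\<exists>b\<in>S. mdvd b g)" "Poly_Mapping.keys c \<subseteq> V"
      then show "Poly_Mapping.keys (c + g) \<subseteq> V \<and> (\<exists>b\<in>S. mdvd b (c + g))"
        by (simp add: keys_add_nat) (meson mdvd_add)
    qed simp
  next
    assume "Poly_Mapping.keys a \<subseteq> V \<and> (\<exists>b\<in>S. mdvd b a)"
    then show "(xmon a :: 'k mpoly) \<in> gen_ideal V (xmon ` S)"
      by (auto intro: gen_ideal_mon)
  qed
  have anti: "b = c" if "b \<in> S" "c \<in> S" "mdvd b c" for b c
    using that S unfolding mingens_def by blast
  show ?thesis
  proof (rule set_eqI, rule iffI)
    fix a assume "a \<in> mingens (gen_ideal V (xmon ` S) :: 'k mpoly set)"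
    then have a1: "Poly_Mapping.keys a \<subseteq> V" "\<exists>b\<in>S. mdvd b a"
      and a2: "\<And>b. Poly_Mapping.keys b \<subseteq> V \<Longrightarrow> (\<exists>c\<in>S. mdvd c b) \<Longrightarrow> mdvd b a \<Longrightarrow> b = a"
      unfolding mingens_def mem by auto
    from a1 obtain b where b: "b \<in> S" "mdvd b a" by blast
    have "b = a" using a2[of b] b SV mdvd_refl by blast
    then show "a \<in> S" using b by simp
  next
    fix a assume a: "a \<in> S"
    show "a \<in> mingens (gen_ideal V (xmon ` S) :: 'k mpoly set)"
      unfolding mingens_def mem
    proof (intro CollectI conjI allI impI)
      show "Poly_Mapping.keys a \<subseteq> V" using a SV by blast
      show "\<exists>b\<in>S. mdvd b a" using a mdvd_refl by blast
      fix b assume "(Poly_Mapping.keys b \<subseteq> V \<and> (\<exists>c\<in>S. mdvd c b)) \<and> mdvd b a"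
      then obtain c where c: "c \<in> S" "mdvd c b" "mdvd b a" by blast
      then have "c = a" using anti[of c a] a mdvd_trans by blast
      then show "b = a" using c mdvd_antisym by blast
    qed
  qed
qed

theorem corollary2p19:
  fixes n :: nat and E :: "nat set" and Ind :: "nat set set" and v :: nat
  assumes "matroid E Ind" and "E \<subseteq> {1..n}" and "{v} \<in> Ind"
  defines "J \<equiv> (Jideal n E Ind :: 'k::field mpoly set)"
  defines "Jv \<equiv> (Jideal n (contr_ground E {v}) (contr_indep E Ind {v}) :: 'k mpoly set)"
  defines "Jdiv \<equiv> gen_ideal {1..n} (xmon ` (mingens J - mingens Jv)) :: 'k mpoly set"
  shows "mingens Jv = {N \<in> mingens J. Poly_Mapping.lookup N v = 0}
     \<and> mingens Jdiv = {N \<in> mingens J. Poly_Mapping.lookup N v \<noteq> 0}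
     \<and> (\<forall>A\<in>Ind. mingens (Jideal n (contr_ground E A) (contr_indep E Ind A) :: 'k mpoly set)
                 = {N \<in> mingens J. Poly_Mapping.keys N \<inter> A = {}})"
proof (intro conjI)
  show 3: "\<forall>A\<in>Ind. mingens (Jideal n (contr_ground E A) (contr_indep E Ind A) :: 'k mpoly set)
                 = {N \<in> mingens J. Poly_Mapping.keys N \<inter> A = {}}"
    using contr_general[OF assms(1,2)] unfolding J_def by blast
  show 1: "mingens Jv = {N \<in> mingens J. Poly_Mapping.lookup N v = 0}"
    unfolding Jv_def using contr_general[OF assms(1,2,3)] unfolding J_def
    by (auto simp: in_keys_iff)
  have S: "mingens J - mingens Jv = {N \<in> mingens J. Poly_Mapping.lookup N v \<noteq> 0}"
    using 1 by auto
  from assms(1) have fE: "finite E" and e: "{} \<in> Ind" and sub: "\<forall>X\<in>Ind. X \<subseteq> E"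
    unfolding matroid_def by auto
  have SV: "\<forall>a\<in>mingens J - mingens Jv. Poly_Mapping.keys a \<subseteq> {1..n}"
    using Jideal_mem[OF fE e sub assms(2)] unfolding J_def mingens_def by blast
  show "mingens Jdiv = {N \<in> mingens J. Poly_Mapping.lookup N v \<noteq> 0}"
    unfolding Jdiv_def using mingens_antichain[of "mingens J - mingens Jv" J "{1..n}"] SV S by auto
qed

end
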